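(* Let $(X,d)$ be a complete separable metric space without isolated points and let $f\colon X\to X$ be a continuous map. Then the following are equivalent: (1) for each $k\geq 2$, $D_k(f)$ is dense in $X^k$; (2) there exist a sequence $\{q_n\}$ in $\mathbb{N}$ and a dense $\sigma$-Cantor subset $S$ of $X$ such that for any $x,y\in S$ with $x\neq y$, $\lim_{n\to\infty} d(f^{q_n}(x),f^{q_n}(y))=\infty$.
   Context: For $k\geq 2$, $D_k(f)=\{(x_1,\dots,x_k)\in X^k: \limsup_{n\to\infty}\min_{1\leq i<j\leq k} d(f^n(x_i),f^n(x_j))=\infty\}$. A $\sigma$-Cantor set is a countable union of sets each homeomorphic to the Cantor ternary set. *)

theory Defs
  imports "HOL-Analysis.Analysis"
begin

text \<open>Tuples in X^k are represented as functions on the index set {..<k},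
  i.e. elements of the extensional function space PiE {..<k} (\<lambda>_. UNIV).\<close>

definition D :: "nat \<Rightarrow> ('a::metric_space \<Rightarrow> 'a) \<Rightarrow> (nat \<Rightarrow> 'a) set" where
  "D k f = {x \<in> PiE {..<k} (\<lambda>_. UNIV).
     limsup (\<lambda>n. ereal (Min {dist ((f ^^ n) (x i)) ((f ^^ n) (x j)) | i j. i < j \<and> j < k}))
       = \<infinity>}"

definition cantor_ternary_set :: "real set" where
  "cantor_ternary_set = {x. \<exists>a::nat \<Rightarrow> nat. (\<forall>n. a n \<in> {0, 2}) \<and>
                              x = (\<Sum>n. real (a n) / 3 ^ (Suc n))}"

definition sigma_Cantor :: "'a::topological_space set \<Rightarrow> bool" where
  "sigma_Cantor S \<longleftrightarrow> (\<exists>\<F>. countable \<F> \<and> S = \<Union>\<F> \<and>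
                        (\<forall>C\<in>\<F>. C homeomorphic cantor_ternary_set))"

end

theory Submission
  imports Defs
begin
lemma compact_bool_seq: "compact (UNIV :: (nat \<Rightarrow> bool) set)"
proof -
  have "compact_space (euclidean :: bool topology)"
    by (simp add: compact_space_def finite_imp_compact)
  then have "compact_space (product_topology (\<lambda>i::nat. euclidean :: bool topology) UNIV)"
    by (simp add: compact_space_product_topology)
  then have "compact_space (euclidean :: (nat \<Rightarrow> bool) topology)"
    by (simp add: euclidean_product_topology)
  then show ?thesis by (simp add: compact_space_def)
qed

lemma open_cylinder: "open {b'::nat \<Rightarrow> bool. \<forall>i\<in>{..<k}. b' i \<in> {b i}}"
  by (rule product_topology_basis'[where x="\<lambda>i. i", simplified]) (auto simp: open_discrete)

lemma cont_coord: "continuous_on UNIV (\<lambda>b::nat\<Rightarrow>bool. g (b n) :: real)"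
proof -
  have "continuous_on UNIV (g :: bool \<Rightarrow> real)"
    by (simp add: continuous_on_discrete)
  then show ?thesis
    by (rule continuous_on_compose2[OF _ continuous_on_product_coordinates]) auto
qed

definition hC :: "(nat \<Rightarrow> bool) \<Rightarrow> real" where
  "hC b = (\<Sum>n. (if b n then 2 else 0) / 3 ^ Suc n)"

lemma summable_geo3: "summable (\<lambda>n. (2::real) / 3 ^ Suc n)"
proof -
  have "summable (\<lambda>n. (2/3::real) * (1/3) ^ n)"
    by (intro summable_mult summable_geometric) auto
  then show ?thesis by (simp add: field_simps power_divide)
qed

lemma suminf_geo3: "(\<Sum>n. (2::real) / 3 ^ Suc n) = 1"
proof -
  have "(\<lambda>n. (2/3::real) * (1/3) ^ n) sums ((2/3) * (1 / (1 - 1/3)))"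
    by (intro sums_mult geometric_sums) auto
  then have "(\<lambda>n. (2::real) / 3 ^ Suc n) sums 1"
    by (simp add: field_simps power_divide)
  then show ?thesis by (simp add: sums_iff)
qed

lemma summable_bnd3:
  fixes c :: "nat \<Rightarrow> real"
  assumes "\<And>n. \<bar>c n\<bar> \<le> 2"
  shows "summable (\<lambda>n. c n / 3 ^ Suc n)"
  by (rule summable_comparison_test[OF _ summable_geo3])
     (auto intro!: exI[of _ 0] divide_right_mono simp: assms abs_divide)

lemma nonzero_lead:
  fixes c :: "nat \<Rightarrow> real"
  assumes "\<And>n. \<bar>c n\<bar> \<le> 2" "\<bar>c 0\<bar> = 2"
  shows "(\<Sum>n. c n / 3 ^ Suc n) \<noteq> 0"
proof -
  have s: "summable (\<lambda>n. c n / 3 ^ Suc n)" using summable_bnd3 assms by blast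
  have s1: "summable (\<lambda>n. c (Suc n) / 3 ^ Suc (Suc n))"
    using summable_ignore_initial_segment[OF s, of 1] by simp
  have eq: "(\<Sum>n. c n / 3 ^ Suc n) = (\<Sum>n. c (Suc n) / 3 ^ Suc (Suc n)) + c 0 / 3"
    using suminf_split_head[OF s] by simp
  have "\<bar>\<Sum>n. c (Suc n) / 3 ^ Suc (Suc n)\<bar> \<le> (\<Sum>n. (2::real) / 3 ^ Suc n) / 3"
  proof -
    have sa: "summable (\<lambda>n. \<bar>c (Suc n) / 3 ^ Suc (Suc n)\<bar>)"
      apply (rule summable_rabs_comparison_test[OF _ summable_geo3])
      apply (rule exI[of _ 0])
      apply clarify
      subgoal for n using assms(1)[of "Suc n"] by (simp add: abs_divide divide_simps)
      done
    then have "\<bar>\<Sum>n. c (Suc n) / 3 ^ Suc (Suc n)\<bar> \<le> (\<Sum>n. \<bar>c (Suc n) / 3 ^ Suc (Suc n)\<bar>)"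
      by (rule summable_rabs)
    also have "\<dots> \<le> (\<Sum>n. ((2::real) / 3 ^ Suc n) / 3)"
      apply (rule suminf_le)
      subgoal for n using assms(1)[of "Suc n"] by (simp add: abs_divide divide_simps)
      subgoal by (rule sa)
      subgoal using summable_divide[OF summable_geo3, of 3] by simp
      done
    also have "\<dots> = (\<Sum>n. (2::real) / 3 ^ Suc n) / 3"
      by (rule suminf_divide[OF summable_geo3])
    finally show ?thesis .
  qed
  then have h1: "\<bar>\<Sum>n. c (Suc n) / 3 ^ Suc (Suc n)\<bar> \<le> 1/3" by (simp only: suminf_geo3)
  have h2: "\<bar>c 0 / 3\<bar> = 2/3" using assms(2) by (simp add: abs_divide)
  show ?thesis
  proof
    assume h0: "(\<Sum>n. c n / 3 ^ Suc n) = 0"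
    then have "(\<Sum>n. c (Suc n) / 3 ^ Suc (Suc n)) = - (c 0 / 3)" using eq by simp
    then have "\<bar>\<Sum>n. c (Suc n) / 3 ^ Suc (Suc n)\<bar> = 2/3" using h2 by simp
    then show False using h1 by simp
  qed
qed

lemma dterm_bnd: "norm ((if b n then 2 else 0) / 3 ^ Suc n :: real) \<le> 2 / 3 ^ Suc n"
  by (auto simp: divide_simps)

lemma summable_hC: "summable (\<lambda>n. (if b n then 2 else 0) / 3 ^ Suc n :: real)"
  by (rule summable_comparison_test[OF _ summable_geo3]) (auto intro!: exI[of _ 0] simp: divide_simps)

lemma cont_hC: "continuous_on UNIV hC"
proof -
  have ul: "uniform_limit UNIV (\<lambda>n b. \<Sum>i<n. (if b i then 2 else 0) / 3 ^ Suc i :: real) hC sequentially"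
    unfolding hC_def[abs_def]
    by (rule Weierstrass_m_test[OF dterm_bnd summable_geo3])
  show ?thesis
  proof (rule uniform_limit_theorem[OF _ ul])
    show "\<forall>\<^sub>F n in sequentially. continuous_on UNIV (\<lambda>b. \<Sum>i<n. (if b i then 2 else 0) / 3 ^ Suc i :: real)"
      by (intro always_eventually allI continuous_on_sum cont_coord[of "\<lambda>x. (if x then 2 else 0) / 3 ^ Suc _"])
  qed simp
qed

lemma inj_hC: "inj hC"
proof (rule injI, rule ccontr)
  fix b b' :: "nat \<Rightarrow> bool"
  assume eq: "hC b = hC b'" and ne: "b \<noteq> b'"
  then obtain n0 where "b n0 \<noteq> b' n0" by auto
  define k where "k = (LEAST n. b n \<noteq> b' n)"
  have bk: "b k \<noteq> b' k" unfolding k_def by (rule LeastI) fact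
  have lt: "n < k \<Longrightarrow> b n = b' n" for n unfolding k_def using not_less_Least by blast
  define c where "c n = (if b n then 2 else 0) - (if b' n then 2 else (0::real))" for n
  have sc: "summable (\<lambda>n. c n / 3 ^ Suc n)"
    by (rule summable_bnd3) (auto simp: c_def)
  have "hC b - hC b' = (\<Sum>n. c n / 3 ^ Suc n)"
    unfolding hC_def c_def diff_divide_distrib
    by (rule suminf_diff) (rule summable_hC)+
  also have "\<dots> = (\<Sum>n. c (n + k) / 3 ^ Suc (n + k)) + (\<Sum>i<k. c i / 3 ^ Suc i)"
    by (rule suminf_split_initial_segment[OF sc])
  also have "(\<Sum>i<k. c i / 3 ^ Suc i) = 0"
    by (rule sum.neutral) (auto simp: c_def lt)
  also have "(\<Sum>n. c (n + k) / 3 ^ Suc (n + k)) = (\<Sum>n. c (n + k) / 3 ^ Suc n / 3 ^ k)"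
    by (simp add: power_add mult_ac)
  also have "\<dots> = (\<Sum>n. c (n + k) / 3 ^ Suc n) / 3 ^ k"
    apply (rule suminf_divide)
    by (rule summable_bnd3) (auto simp: c_def)
  finally have "hC b - hC b' = (\<Sum>n. c (n + k) / 3 ^ Suc n) / 3 ^ k" by simp
  moreover have "(\<Sum>n. c (n + k) / 3 ^ Suc n) \<noteq> 0"
    by (rule nonzero_lead) (use bk in \<open>auto simp: c_def\<close>)
  ultimately show False using eq by simp
qed

lemma image_hC: "range hC = cantor_ternary_set"
proof (intro equalityI subsetI)
  fix x assume "x \<in> range hC"
  then obtain b where x: "x = hC b" by auto
  show "x \<in> cantor_ternary_set"
    unfolding cantor_ternary_set_def x hC_def
    by (rule CollectI, rule exI[of _ "\<lambda>n. if b n then 2 else 0"]) (auto intro!: suminf_cong)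
next
  fix x assume "x \<in> cantor_ternary_set"
  then obtain a :: "nat \<Rightarrow> nat" where a: "\<forall>n. a n \<in> {0, 2}" "x = (\<Sum>n. real (a n) / 3 ^ (Suc n))"
    unfolding cantor_ternary_set_def by auto
  have an: "real (a n) = (if a n = 2 then 2 else 0)" for n
    using a(1) by (cases "a n = 2") auto
  have "x = hC (\<lambda>n. a n = 2)"
    unfolding a(2) hC_def by (simp only: an)
  then show "x \<in> range hC" by auto
qed

lemma cantor_homeo:
  fixes g :: "(nat \<Rightarrow> bool) \<Rightarrow> 'b::t2_space"
  assumes "continuous_on UNIV g" "inj g"
  shows "range g homeomorphic cantor_ternary_set"
proof -
  have "range g homeomorphic (UNIV :: (nat \<Rightarrow> bool) set)"
    using homeomorphism_compact[OF compact_bool_seq assms(1) refl assms(2)]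
    by (meson homeomorphic_def homeomorphic_sym)
  moreover have "(UNIV :: (nat \<Rightarrow> bool) set) homeomorphic cantor_ternary_set"
    using homeomorphism_compact[OF compact_bool_seq cont_hC refl inj_hC] image_hC
    by (auto simp: homeomorphic_def)
  ultimately show ?thesis by (rule homeomorphic_trans)
qed

lemma fin_pairs: "finite {g i j | i j. i < j \<and> j < (k::nat)}"
  by (rule finite_subset[of _ "(\<lambda>(i,j). g i j) ` ({..<k} \<times> {..<k})"]) auto

lemma Min_pairs_le: "a < b \<Longrightarrow> b < k \<Longrightarrow> Min {g i j | i j. i < j \<and> j < (k::nat)} \<le> g a b"
  by (rule Min_le[OF fin_pairs]) auto

lemma cont_iter: fixes f :: "'a::topological_space \<Rightarrow> 'a" shows "continuous_on UNIV f \<Longrightarrow> continuous_on UNIV (f ^^ q)"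
proof (induction q)
  case 0 then show ?case by (simp add: id_def)
next
  case (Suc q)
  have "continuous_on (range (f ^^ q)) f" using continuous_on_subset[OF Suc.prems] by blast
  then show ?case
    unfolding funpow.simps(2) by (rule continuous_on_compose[OF Suc.IH[OF Suc.prems]])
qed

locale constr =
  fixes f :: "'a::polish_space \<Rightarrow> 'a" and U :: "nat \<Rightarrow> 'a set"
  assumes contf: "continuous_on UNIV f"
  and dens: "\<forall>k\<ge>2. (product_topology (\<lambda>_. euclidean) {..<k}) closure_of (D k f)
                 = topspace (product_topology (\<lambda>_. euclidean) {..<k})"
  and Uopen: "\<And>m. open (U m)" and Une: "\<And>m. U m \<noteq> {}"
begin

lemma sep:
  assumes J: "finite J" and Wo: "\<And>j. j \<in> J \<Longrightarrow> open (W j)" and Wne: "\<And>j. j \<in> J \<Longrightarrow> W j \<noteq> {}"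
  shows "\<exists>q x. (\<forall>j\<in>J. x j \<in> W j) \<and> (\<forall>i\<in>J. \<forall>j\<in>J. i \<noteq> j \<longrightarrow> M < dist ((f^^q) (x i)) ((f^^q) (x j)))"
proof (cases "card J < 2")
  case True
  define x where "x j = (SOME y. y \<in> W j)" for j
  have "\<forall>j\<in>J. x j \<in> W j" using Wne unfolding x_def by (meson ex_in_conv someI_ex)
  moreover have "\<forall>i\<in>J. \<forall>j\<in>J. i = j"
    using True card_le_Suc0_iff_eq[OF J] by simp
  ultimately show ?thesis by blast
next
  case False
  define k where "k = card J"
  have k2: "k \<ge> 2" using False k_def by simp
  obtain h where h: "bij_betw h {..<k} J"
    using ex_bij_betw_nat_finite[OF J] unfolding k_def by (auto simp: lessThan_atLeast0)
  define z where "z = restrict (\<lambda>i. SOME y. y \<in> W (h i)) {..<k}"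
  have hJ: "i < k \<Longrightarrow> h i \<in> J" for i using h by (auto simp: bij_betw_def)
  have zin: "z \<in> PiE {..<k} (\<lambda>i. W (h i))"
    unfolding z_def using Wne hJ by (auto simp: PiE_iff) (meson ex_in_conv someI_ex)
  have op: "openin (product_topology (\<lambda>_. euclidean) {..<k}) (PiE {..<k} (\<lambda>i. W (h i)))"
    by (subst openin_PiE) (auto simp: Wo hJ)
  have "z \<in> (product_topology (\<lambda>_. euclidean) {..<k}) closure_of (D k f)"
    using dens k2 zin by (auto simp: PiE_iff)
  then obtain y where y: "y \<in> D k f" "y \<in> PiE {..<k} (\<lambda>i. W (h i))"
    unfolding in_closure_of using zin op by blast
  define P where "P n = {dist ((f ^^ n) (y i)) ((f ^^ n) (y j)) | i j. i < j \<and> j < k}" for n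
  from y(1) have lim: "limsup (\<lambda>n. ereal (Min (P n))) = \<infinity>"
    unfolding D_def P_def by simp
  have "\<exists>n. M < Min (P n)"
  proof (rule ccontr)
    assume "\<not> ?thesis"
    then have "\<forall>n. ereal (Min (P n)) \<le> ereal M" by (auto simp: not_less)
    then have "limsup (\<lambda>n. ereal (Min (P n))) \<le> ereal M"
      by (intro Limsup_bounded always_eventually) auto
    then show False using lim by simp
  qed
  then obtain n where n: "M < Min (P n)" by blast
  define x where "x j = y (the_inv_into {..<k} h j)" for j
  have inv: "j \<in> J \<Longrightarrow> the_inv_into {..<k} h j < k \<and> h (the_inv_into {..<k} h j) = j" for j
    using h by (metis bij_betw_def f_the_inv_into_f lessThan_iff the_inv_into_into order_refl)
  show ?thesis
  proof (intro exI[of _ n] exI[of _ x] conjI ballI impI)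
    fix j assume "j \<in> J"
    then show "x j \<in> W j" using inv[of j] y(2) unfolding x_def PiE_iff by (metis lessThan_iff)
  next
    fix i j assume ij: "i \<in> J" "j \<in> J" "i \<noteq> j"
    define a where "a = the_inv_into {..<k} h i"
    define b where "b = the_inv_into {..<k} h j"
    have ab: "a < k" "b < k" "a \<noteq> b" using inv ij unfolding a_def b_def by metis+
    show "M < dist ((f^^n) (x i)) ((f^^n) (x j))"
    proof (cases "a < b")
      case True
      have "Min (P n) \<le> dist ((f ^^ n) (y a)) ((f ^^ n) (y b))"
        unfolding P_def by (rule Min_pairs_le) (use True ab in auto)
      then show ?thesis using n unfolding x_def a_def b_def by simp
    next
      case False
      then have "b < a" using ab by simp
      then have "Min (P n) \<le> dist ((f ^^ n) (y b)) ((f ^^ n) (y a))"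
        unfolding P_def by (intro Min_pairs_le) (use ab in auto)
      then show ?thesis using n unfolding x_def a_def b_def by (simp add: dist_commute)
    qed
  qed
qed

lemma rad:
  assumes "open W" "x \<in> W" "\<epsilon> > 0"
  shows "\<exists>r>0. r \<le> \<epsilon> \<and> cball x r \<subseteq> W \<and> (\<forall>y\<in>cball x r. dist ((f^^q) y) ((f^^q) x) < 1/2)"
proof -
  obtain e where e: "e > 0" "ball x e \<subseteq> W" using assms open_contains_ball by blast
  obtain d where d: "d > 0" "\<forall>y. dist y x < d \<longrightarrow> dist ((f^^q) y) ((f^^q) x) < 1/2"
    using cont_iter[OF contf, of q] unfolding continuous_on_iff by (metis UNIV_I half_gt_zero_iff zero_less_one)
  define r where "r = min \<epsilon> (min (e/2) (d/2))"
  have "r > 0" using e d assms by (simp add: r_def)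
  moreover have "cball x r \<subseteq> W"
    using e(2) \<open>e>0\<close> unfolding r_def by (force simp: subset_eq dist_commute)
  moreover have "\<forall>y\<in>cball x r. dist ((f^^q) y) ((f^^q) x) < 1/2"
    using d unfolding r_def by (auto simp: dist_commute)
  ultimately show ?thesis unfolding r_def by (intro exI[of _ r]) (auto simp: r_def)
qed

end

definition I :: "nat \<Rightarrow> (nat \<times> bool list) set" where
  "I n = {(m,s). m \<le> n \<and> length s = n - m}"

lemma finite_I: "finite (I n)"
proof -
  have "I n \<subseteq> {..n} \<times> {xs. set xs \<subseteq> UNIV \<and> length xs \<le> n}" unfolding I_def by auto
  moreover have "finite ({..n} \<times> {xs. set xs \<subseteq> (UNIV::bool set) \<and> length xs \<le> n})"
    by (intro finite_cartesian_product finite_lists_length_le) auto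
  ultimately show ?thesis by (rule finite_subset)
qed

context constr
begin

definition Wn where
  "Wn c r n p = (if fst p = Suc n then U (Suc n) else ball (c (fst p, butlast (snd p))) (r (fst p, butlast (snd p))))"

definition good :: "nat \<Rightarrow> (nat \<times> bool list \<Rightarrow> 'a) \<Rightarrow> (nat \<times> bool list \<Rightarrow> real) \<Rightarrow> nat \<Rightarrow> bool" where
  "good n c r q \<longleftrightarrow> (\<forall>p\<in>I n. 0 < r p \<and> r p \<le> 1 / real (Suc n)) \<and>
     (\<forall>p\<in>I n. \<forall>p'\<in>I n. p \<noteq> p' \<longrightarrow>
        (\<forall>x\<in>cball (c p) (r p). \<forall>y\<in>cball (c p') (r p'). real n \<le> dist ((f^^q) x) ((f^^q) y)))"

lemma step:
  assumes rpos: "\<forall>p\<in>I n. 0 < r p"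
  shows "\<exists>c' r' q'. good (Suc n) c' r' q' \<and> (\<forall>p\<in>I (Suc n). cball (c' p) (r' p) \<subseteq> Wn c r n p)"
proof -
  have W: "open (Wn c r n p) \<and> Wn c r n p \<noteq> {}" if p: "p \<in> I (Suc n)" for p
  proof (cases "fst p = Suc n")
    case True
    then show ?thesis using Uopen Une by (simp add: Wn_def)
  next
    case False
    obtain m s where ps: "p = (m, s)" by (cases p)
    have "m \<le> n" "length s = Suc n - m" using p False ps by (auto simp: I_def)
    then have "(m, butlast s) \<in> I n" by (auto simp: I_def)
    then have "0 < r (m, butlast s)" using rpos by blast
    then show ?thesis using False ps by (simp add: Wn_def)
  qed
  have Wo: "\<And>j. j \<in> I (Suc n) \<Longrightarrow> open (Wn c r n j)" using W by blast
  have Wne: "\<And>j. j \<in> I (Suc n) \<Longrightarrow> Wn c r n j \<noteq> {}" using W by blast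
  have "\<exists>q x. (\<forall>j\<in>I (Suc n). x j \<in> Wn c r n j) \<and>
    (\<forall>i\<in>I (Suc n). \<forall>j\<in>I (Suc n). i \<noteq> j \<longrightarrow> real n + 2 < dist ((f^^q) (x i)) ((f^^q) (x j)))"
    by (rule sep[OF finite_I Wo Wne])
  then obtain q x where qx: "\<forall>j\<in>I (Suc n). x j \<in> Wn c r n j"
    "\<forall>i\<in>I (Suc n). \<forall>j\<in>I (Suc n). i \<noteq> j \<longrightarrow> real n + 2 < dist ((f^^q) (x i)) ((f^^q) (x j))"
    by (elim exE conjE) 
  have "\<forall>p\<in>I (Suc n). \<exists>\<rho>. 0 < \<rho> \<and> \<rho> \<le> 1 / real (Suc (Suc n)) \<and> cball (x p) \<rho> \<subseteq> Wn c r n p \<and>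
          (\<forall>y\<in>cball (x p) \<rho>. dist ((f^^q) y) ((f^^q) (x p)) < 1/2)"
  proof
    fix p assume p: "p \<in> I (Suc n)"
    show "\<exists>\<rho>. 0 < \<rho> \<and> \<rho> \<le> 1 / real (Suc (Suc n)) \<and> cball (x p) \<rho> \<subseteq> Wn c r n p \<and>
          (\<forall>y\<in>cball (x p) \<rho>. dist ((f^^q) y) ((f^^q) (x p)) < 1/2)"
      using rad[OF Wo[OF p] bspec[OF qx(1) p], of "1 / real (Suc (Suc n))" q] by simp
  qed
  from bchoice[OF this] obtain \<rho> where \<rho>: "\<forall>p\<in>I (Suc n). 0 < \<rho> p \<and> \<rho> p \<le> 1 / real (Suc (Suc n)) \<and> cball (x p) (\<rho> p) \<subseteq> Wn c r n p \<and>
          (\<forall>y\<in>cball (x p) (\<rho> p). dist ((f^^q) y) ((f^^q) (x p)) < 1/2)"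
    by blast
  have "good (Suc n) x \<rho> q"
    unfolding good_def
  proof (intro conjI ballI impI)
    fix p assume "p \<in> I (Suc n)"
    then show "0 < \<rho> p" "\<rho> p \<le> 1 / real (Suc (Suc n))" using \<rho> by auto
  next
    fix p p' a b assume pp: "p \<in> I (Suc n)" "p' \<in> I (Suc n)" "p \<noteq> p'"
      and ab: "a \<in> cball (x p) (\<rho> p)" "b \<in> cball (x p') (\<rho> p')"
    have d1: "dist ((f^^q) a) ((f^^q) (x p)) < 1/2" using \<rho> pp ab by blast
    have d2: "dist ((f^^q) b) ((f^^q) (x p')) < 1/2" using \<rho> pp ab by blast
    have d3: "real n + 2 < dist ((f^^q) (x p)) ((f^^q) (x p'))" using qx(2) pp by blast
    have t1: "dist ((f^^q) (x p)) ((f^^q) (x p')) \<le> dist ((f^^q) (x p)) ((f^^q) a) + dist ((f^^q) a) ((f^^q) (x p'))"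
      by (rule dist_triangle)
    have t2: "dist ((f^^q) a) ((f^^q) (x p')) \<le> dist ((f^^q) a) ((f^^q) b) + dist ((f^^q) b) ((f^^q) (x p'))"
      by (rule dist_triangle)
    have d1': "dist ((f^^q) (x p)) ((f^^q) a) < 1/2" using d1 by (simp add: dist_commute)
    show "real (Suc n) \<le> dist ((f^^q) a) ((f^^q) b)"
      using d1' d2 d3 t1 t2 by simp
  qed
  then show ?thesis using \<rho> by blast
qed

lemma init: "\<exists>c r q. good 0 c r q \<and> cball (c (0,[])) (r (0,[])) \<subseteq> U 0"
proof -
  obtain x0 where x0: "x0 \<in> U 0" using Une by blast
  obtain \<rho> where \<rho>: "\<rho> > 0" "\<rho> \<le> 1" "cball x0 \<rho> \<subseteq> U 0"
    using rad[OF Uopen x0, of 1 0] by auto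
  have "good 0 (\<lambda>_. x0) (\<lambda>_. \<rho>) 0" using \<rho> by (auto simp: good_def)
  then show ?thesis using \<rho> by blast
qed

primrec st :: "nat \<Rightarrow> (nat \<times> bool list \<Rightarrow> 'a) \<times> (nat \<times> bool list \<Rightarrow> real) \<times> nat" where
  "st 0 = (SOME t. good 0 (fst t) (fst (snd t)) (snd (snd t)) \<and> cball (fst t (0,[])) (fst (snd t) (0,[])) \<subseteq> U 0)"
| "st (Suc n) = (SOME t. good (Suc n) (fst t) (fst (snd t)) (snd (snd t)) \<and>
     (\<forall>p\<in>I (Suc n). cball (fst t p) (fst (snd t) p) \<subseteq> Wn (fst (st n)) (fst (snd (st n))) n p))"

definition "CC n = fst (st n)"
definition "RR n = fst (snd (st n))"
definition "QQ n = snd (snd (st n))"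

lemma st0: "good 0 (CC 0) (RR 0) (QQ 0) \<and> cball (CC 0 (0,[])) (RR 0 (0,[])) \<subseteq> U 0"
proof -
  obtain c r q where "good 0 c r q \<and> cball (c (0,[])) (r (0,[])) \<subseteq> U 0" using init by blast
  then show ?thesis unfolding CC_def RR_def QQ_def st.simps
    by (rule someI[where x="(c, r, q)" and P="\<lambda>t. good 0 (fst t) (fst (snd t)) (snd (snd t)) \<and> cball (fst t (0,[])) (fst (snd t) (0,[])) \<subseteq> U 0", simplified])
qed

lemma stS:
  assumes "good n (CC n) (RR n) (QQ n)"
  shows "good (Suc n) (CC (Suc n)) (RR (Suc n)) (QQ (Suc n)) \<and>
     (\<forall>p\<in>I (Suc n). cball (CC (Suc n) p) (RR (Suc n) p) \<subseteq> Wn (CC n) (RR n) n p)"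
proof -
  have "\<forall>p\<in>I n. 0 < RR n p" using assms by (simp add: good_def)
  then obtain c r q where "good (Suc n) c r q \<and> (\<forall>p\<in>I (Suc n). cball (c p) (r p) \<subseteq> Wn (CC n) (RR n) n p)"
    using step by blast
  then show ?thesis unfolding CC_def RR_def QQ_def st.simps
    by (rule someI[where x="(c, r, q)" and P="\<lambda>t. good (Suc n) (fst t) (fst (snd t)) (snd (snd t)) \<and>
     (\<forall>p\<in>I (Suc n). cball (fst t p) (fst (snd t) p) \<subseteq> Wn (fst (st n)) (fst (snd (st n))) n p)", simplified])
qed

lemma st_good: "good n (CC n) (RR n) (QQ n)"
  by (induction n) (use st0 stS in auto)

lemma st_next: "\<forall>p\<in>I (Suc n). cball (CC (Suc n) p) (RR (Suc n) p) \<subseteq> Wn (CC n) (RR n) n p"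
  using stS[OF st_good] by blast

end

definition word :: "(nat \<Rightarrow> bool) \<Rightarrow> nat \<Rightarrow> bool list" where
  "word b k = map b [0..<k]"

lemma word_Suc: "word b (Suc k) = word b k @ [b k]"
  by (simp add: word_def)

lemma length_word[simp]: "length (word b k) = k"
  by (simp add: word_def)

lemma word_in_I: "(m, word b k) \<in> I (m + k)"
  by (simp add: I_def)

lemma word_eq: "(\<forall>i<k. b' i = b i) \<Longrightarrow> word b' k = word b k"
  by (simp add: word_def)

lemma word_neq: "b j \<noteq> b' j \<Longrightarrow> j < k \<Longrightarrow> word b k \<noteq> word b' k"
  unfolding word_def by (metis add_0 diff_zero nth_map_upt)

context constr
begin

definition K where
  "K m b k = cball (CC (m+k) (m, word b k)) (RR (m+k) (m, word b k))"

lemma RR_bounds: "0 < RR (m+k) (m, word b k)" "RR (m+k) (m, word b k) \<le> 1 / real (Suc (m+k))"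
  using st_good[of "m+k"] word_in_I[of m b k] unfolding good_def by auto

lemma K_Suc: "K m b (Suc k) \<subseteq> K m b k"
proof -
  have p: "(m, word b k @ [b k]) \<in> I (Suc (m+k))" using word_in_I[of m b "Suc k"] by (simp add: word_Suc)
  have "K m b (Suc k) \<subseteq> Wn (CC (m+k)) (RR (m+k)) (m+k) (m, word b k @ [b k])"
    using st_next[of "m+k"] p unfolding K_def by (simp add: word_Suc)
  also have "\<dots> = ball (CC (m+k) (m, word b k)) (RR (m+k) (m, word b k))"
    by (simp add: Wn_def)
  also have "\<dots> \<subseteq> K m b k" unfolding K_def by (rule ball_subset_cball)
  finally show ?thesis .
qed

lemma K_mono: "k \<le> k' \<Longrightarrow> K m b k' \<subseteq> K m b k"
  by (rule lift_Suc_antimono_le[of "K m b"]) (use K_Suc in auto)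

lemma K_root: "K m b 0 \<subseteq> U m"
proof (cases m)
  case 0 then show ?thesis using st0 by (simp add: K_def word_def)
next
  case (Suc n)
  have p: "(Suc n, []) \<in> I (Suc n)" by (simp add: I_def)
  have "cball (CC (Suc n) (Suc n, [])) (RR (Suc n) (Suc n, [])) \<subseteq> Wn (CC n) (RR n) n (Suc n, [])"
    using st_next[of n] p by blast
  then show ?thesis using Suc by (simp add: K_def word_def Wn_def)
qed

lemma K_diam: "x \<in> K m b k \<Longrightarrow> y \<in> K m b k \<Longrightarrow> dist x y \<le> 2 / real (Suc k)"
proof -
  assume xy: "x \<in> K m b k" "y \<in> K m b k"
  let ?c = "CC (m+k) (m, word b k)" and ?r = "RR (m+k) (m, word b k)"
  have "dist x y \<le> dist x ?c + dist ?c y" by (rule dist_triangle)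
  also have "\<dots> \<le> 2 * ?r" using xy unfolding K_def by (simp add: dist_commute)
  also have "\<dots> \<le> 2 / real (Suc (m+k))" using RR_bounds(2)[of m k b] by simp
  also have "\<dots> \<le> 2 / real (Suc k)" by (simp add: frac_le)
  finally show ?thesis .
qed

lemma small: "\<epsilon> > 0 \<Longrightarrow> \<exists>k. 2 / real (Suc k) < \<epsilon>"
proof -
  assume "\<epsilon> > 0"
  then obtain k :: nat where "2 / \<epsilon> < k" using reals_Archimedean2 by blast
  then have "2 / real (Suc k) < \<epsilon>" using \<open>\<epsilon> > 0\<close> by (simp add: field_simps)
  then show ?thesis by blast
qed

lemma K_nest: "\<exists>a. \<forall>k. a \<in> K m b k"
proof -
  obtain a where "\<And>k. a \<in> K m b k"
  proof (rule decreasing_closed_nest[of "K m b"])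
    show "closed (K m b k)" for k by (simp add: K_def)
    show "K m b k \<noteq> {}" for k using RR_bounds(1)[of m k b] by (simp add: K_def)
    show "K m b k' \<subseteq> K m b k" if "k \<le> k'" for k k' using K_mono that by blast
    show "\<exists>k. \<forall>x\<in>K m b k. \<forall>y\<in>K m b k. dist x y < \<epsilon>" if eps: "\<epsilon> > 0" for \<epsilon>
    proof -
      obtain k where "2 / real (Suc k) < \<epsilon>" using small[OF eps] by blast
      then show ?thesis using K_diam by (meson le_less_trans)
    qed
  qed blast
  then show ?thesis by blast
qed

definition G where "G m b = (SOME a. \<forall>k. a \<in> K m b k)"

lemma G_in: "G m b \<in> K m b k"
  using someI_ex[OF K_nest[of m b]] unfolding G_def by blast

lemma sepK:
  assumes "m + k = n" "m' + k' = n" "(m, word b k) \<noteq> (m', word b' k')"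
    "x \<in> K m b k" "y \<in> K m' b' k'"
  shows "real n \<le> dist ((f^^QQ n) x) ((f^^QQ n) y)"
proof -
  have "(m, word b k) \<in> I n" "(m', word b' k') \<in> I n" using word_in_I[of m b k] word_in_I[of m' b' k'] assms(1,2) by simp_all
  note pI = this
  have g: "\<forall>p\<in>I n. \<forall>p'\<in>I n. p \<noteq> p' \<longrightarrow>
        (\<forall>x\<in>cball (CC n p) (RR n p). \<forall>y\<in>cball (CC n p') (RR n p'). real n \<le> dist ((f^^QQ n) x) ((f^^QQ n) y))"
    using st_good[of n] unfolding good_def by (elim conjE)
  have xK: "x \<in> cball (CC n (m, word b k)) (RR n (m, word b k))" using assms(4) assms(1) unfolding K_def by simp
  have yK: "y \<in> cball (CC n (m', word b' k')) (RR n (m', word b' k'))" using assms(5) assms(2) unfolding K_def by simp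
  show ?thesis using g pI assms(3) xK yK by blast
qed

lemma G_inj: "inj (G m)"
proof (rule injI, rule ccontr)
  fix b b' assume eq: "G m b = G m b'" and ne: "b \<noteq> b'"
  then obtain j where j: "b j \<noteq> b' j" by auto
  have "word b (Suc j) \<noteq> word b' (Suc j)" by (rule word_neq[of b j b']) (use j in simp_all)
  then have "real (m + Suc j) \<le> dist ((f^^QQ (m + Suc j)) (G m b)) ((f^^QQ (m + Suc j)) (G m b'))"
    by (intro sepK[OF refl refl]) (auto intro: G_in)
  then show False using eq by simp
qed

lemma G_cont: "continuous_on UNIV (G m)"
  unfolding continuous_on_def
proof (intro ballI)
  fix b :: "nat \<Rightarrow> bool"
  show "(G m \<longlongrightarrow> G m b) (at b within UNIV)"
    unfolding tendsto_iff
  proof (intro allI impI)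
    fix \<epsilon> :: real assume "\<epsilon> > 0"
    then obtain k where k: "2 / real (Suc k) < \<epsilon>" using small by blast
    let ?N = "{b'::nat \<Rightarrow> bool. \<forall>i\<in>{..<k}. b' i \<in> {b i}}"
    have "open ?N" by (rule open_cylinder)
    moreover have "b \<in> ?N" by simp
    moreover have "dist (G m b') (G m b) < \<epsilon>" if "b' \<in> ?N" for b'
    proof -
      have "word b' k = word b k" using that by (intro word_eq) auto
      then have "G m b' \<in> K m b k" using G_in[of m b' k] by (simp add: K_def)
      then show ?thesis using K_diam[OF _ G_in] k by (meson le_less_trans)
    qed
    ultimately show "\<forall>\<^sub>F b' in at b within UNIV. dist (G m b') (G m b) < \<epsilon>"
      unfolding eventually_at_topological by blast
  qed
qed

lemma G_homeo: "range (G m) homeomorphic cantor_ternary_set"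
  by (rule cantor_homeo[OF G_cont G_inj])

lemma G_diverge:
  assumes "G m b \<noteq> G m' b'"
  shows "filterlim (\<lambda>n. dist ((f ^^ QQ n) (G m b)) ((f ^^ QQ n) (G m' b'))) at_top sequentially"
proof -
  obtain N0 where N0: "\<And>n. n \<ge> N0 \<Longrightarrow> (m, word b (n - m)) \<noteq> (m', word b' (n - m'))"
  proof (cases "m = m'")
    case True
    then have "b \<noteq> b'" using assms by auto
    then obtain j where j: "b j \<noteq> b' j" by auto
    show ?thesis
      by (rule that[of "m + Suc j"]) (use word_neq[of b j b'] j True in auto)
  next
    case False
    then show ?thesis using that by auto
  qed
  show ?thesis
    unfolding filterlim_at_top
  proof (intro allI)
    fix Z :: real
    obtain N1 :: nat where "Z \<le> N1" using real_nat_ceiling_ge by blast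
    show "\<forall>\<^sub>F n in sequentially. Z \<le> dist ((f ^^ QQ n) (G m b)) ((f ^^ QQ n) (G m' b'))"
      unfolding eventually_sequentially
    proof (intro exI[of _ "max (max N0 N1) (max m m')"] allI impI)
      fix n assume n: "max (max N0 N1) (max m m') \<le> n"
      have "real n \<le> dist ((f ^^ QQ n) (G m b)) ((f ^^ QQ n) (G m' b'))"
        by (rule sepK[of m "n - m" n m' "n - m'" b b']) (use n N0 G_in in auto)
      then show "Z \<le> dist ((f ^^ QQ n) (G m b)) ((f ^^ QQ n) (G m' b'))"
        using n \<open>Z \<le> N1\<close> by linarith
    qed
  qed
qed

lemma result:
  assumes cover: "\<And>V. open V \<Longrightarrow> V \<noteq> {} \<Longrightarrow> \<exists>m. U m \<subseteq> V"
  shows "\<exists>q :: nat \<Rightarrow> nat. \<exists>S. sigma_Cantor S \<and> closure S = UNIV \<and>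
            (\<forall>x\<in>S. \<forall>y\<in>S. x \<noteq> y \<longrightarrow>
               filterlim (\<lambda>n. dist ((f ^^ q n) x) ((f ^^ q n) y)) at_top sequentially)"
proof (intro exI conjI)
  let ?S = "\<Union>m. range (G m)"
  show "sigma_Cantor ?S"
    unfolding sigma_Cantor_def
    by (intro exI[of _ "range (\<lambda>m. range (G m))"]) (auto simp: G_homeo)
  show "\<forall>x\<in>?S. \<forall>y\<in>?S. x \<noteq> y \<longrightarrow> filterlim (\<lambda>n. dist ((f ^^ QQ n) x) ((f ^^ QQ n) y)) at_top sequentially"
    using G_diverge by blast
  show "closure ?S = UNIV"
  proof (rule ccontr)
    assume "closure ?S \<noteq> UNIV"
    then have "open (- closure ?S)" "- closure ?S \<noteq> {}" by auto
    then obtain m where m: "U m \<subseteq> - closure ?S" using cover by blast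
    have "G m (\<lambda>_. True) \<in> U m" using G_in[of m _ 0] K_root by blast
    moreover have "G m (\<lambda>_. True) \<in> closure ?S"
      by (rule subsetD[OF closure_subset]) blast
    ultimately show False using m by (auto simp: subset_eq)
  qed
qed

end

lemma dense_inf:
  fixes S :: "'a::{metric_space,perfect_space} set"
  assumes "closure S = UNIV" "open V" "V \<noteq> {}"
  shows "infinite (S \<inter> V)"
proof
  assume fin: "finite (S \<inter> V)"
  obtain x where x: "x \<in> V" using assms(3) by blast
  obtain e where e: "e > 0" "ball x e \<subseteq> V" using assms(2) x open_contains_ball by blast
  have "infinite (UNIV \<inter> ball x e)" using islimpt_UNIV[of x] e(1) unfolding islimpt_eq_infinite_ball by blast
  then have "infinite V" using e(2) finite_subset by auto
  then have ne: "V - (S \<inter> V) \<noteq> {}" using fin by (metis Diff_infinite_finite finite.emptyI)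
  have op: "open (V - (S \<inter> V))" using assms(2) fin by (intro open_Diff finite_imp_closed)
  have "(V - (S \<inter> V)) \<inter> closure S = {}"
    using open_Int_closure_eq_empty[OF op, of S] by blast
  then show False using ne assms(1) by simp
qed

lemma choose_inj:
  fixes k :: nat
  assumes "\<And>i. i < k \<Longrightarrow> infinite (A i)"
  shows "\<exists>y. (\<forall>i<k. y i \<in> A i) \<and> (\<forall>i<k. \<forall>j<k. i \<noteq> j \<longrightarrow> y i \<noteq> y j)"
  using assms
proof (induction k)
  case 0 then show ?case by simp
next
  case (Suc k)
  then obtain y where y: "\<forall>i<k. y i \<in> A i" "\<forall>i<k. \<forall>j<k. i \<noteq> j \<longrightarrow> y i \<noteq> y j" by auto
  have "infinite (A k - y ` {..<k})" using Suc.prems[of k] by (simp add: Diff_infinite_finite)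
  then obtain z where z: "z \<in> A k" "z \<notin> y ` {..<k}" by (metis Diff_iff finite.emptyI ex_in_conv)
  show ?case
    by (rule exI[of _ "y(k := z)"]) (use y z in \<open>auto simp: less_Suc_eq\<close>)
qed

lemma limsup_infty:
  fixes u :: "nat \<Rightarrow> real" and q :: "nat \<Rightarrow> nat"
  assumes ev: "\<And>M. \<forall>\<^sub>F n in sequentially. M < u (q n)"
  shows "limsup (\<lambda>n. ereal (u n)) = \<infinity>"
  unfolding limsup_INF_SUP
proof -
  have "(SUP m\<in>{N..}. ereal (u m)) = \<infinity>" for N
    unfolding top_ereal_def[symmetric] SUP_eq_top_iff
  proof (intro allI impI)
    fix x :: ereal assume "x < top"
    then obtain M :: real where M: "x < ereal M"
      by (metis less_ereal.simps(4) ereal_dense2 ereal_less_PInfty top_ereal_def)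
    let ?M' = "\<bar>M\<bar> + (\<Sum>m<N. \<bar>u m\<bar>)"
    obtain n where n: "?M' < u (q n)" using eventually_happens'[OF _ ev[of ?M']] by auto
    have "q n \<ge> N"
    proof (rule ccontr)
      assume "\<not> q n \<ge> N"
      then have "\<bar>u (q n)\<bar> \<le> (\<Sum>m<N. \<bar>u m\<bar>)"
        by (intro member_le_sum[where f="\<lambda>m. \<bar>u m\<bar>"]) auto
      then show False using n by linarith
    qed
    moreover have "x < ereal (u (q n))" using M n
      by (smt (verit, ccfv_SIG) abs_ge_self ereal_less_eq(3) order_less_le_trans sum_nonneg abs_ge_zero)
    ultimately show "\<exists>i\<in>{N..}. x < ereal (u i)" by auto
  qed
  then show "(INF n. SUP m\<in>{n..}. ereal (u m)) = \<infinity>" by simp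
qed

theorem corollary2p5:
  fixes f :: "'a::{polish_space, perfect_space} \<Rightarrow> 'a"
  assumes "continuous_on UNIV f"
  shows "(\<forall>k\<ge>2. (product_topology (\<lambda>_. euclidean) {..<k}) closure_of (D k f)
                 = topspace (product_topology (\<lambda>_. euclidean) {..<k}))
     \<longleftrightarrow> (\<exists>q :: nat \<Rightarrow> nat. \<exists>S. sigma_Cantor S \<and> closure S = UNIV \<and>
            (\<forall>x\<in>S. \<forall>y\<in>S. x \<noteq> y \<longrightarrow>
               filterlim (\<lambda>n. dist ((f ^^ q n) x) ((f ^^ q n) y)) at_top sequentially))"
proof
  assume H1: "\<forall>k\<ge>2. (product_topology (\<lambda>_. euclidean) {..<k}) closure_of (D k f)
                 = topspace (product_topology (\<lambda>_. euclidean) {..<k})"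
  obtain B :: "'a set set" where B: "countable B" "\<And>C. C \<in> B \<Longrightarrow> open C"
    "\<And>S. open S \<Longrightarrow> \<exists>U. U \<subseteq> B \<and> S = \<Union>U"
    using univ_second_countable by blast
  define B' where "B' = B - {{}}"
  have cov: "\<exists>C\<in>B'. C \<subseteq> V" if V: "open V" "V \<noteq> {}" for V
  proof -
    obtain W where W: "W \<subseteq> B" "V = \<Union>W" using B(3)[OF V(1)] by blast
    then obtain C where "C \<in> W" "C \<noteq> {}" using V(2) by blast
    then show ?thesis using W unfolding B'_def by blast
  qed
  have B'ne: "B' \<noteq> {}" using cov[of UNIV] by auto
  have cB': "countable B'" unfolding B'_def using B(1) by simp
  define U where "U = from_nat_into B'"
  have c: "constr f U"
  proof
    show "continuous_on UNIV f" by fact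
    show "\<forall>k\<ge>2. (product_topology (\<lambda>_. euclidean) {..<k}) closure_of (D k f)
                 = topspace (product_topology (\<lambda>_. euclidean) {..<k})" by fact
    show "open (U m)" for m using from_nat_into[OF B'ne, of m] B(2) unfolding U_def B'_def by blast
    show "U m \<noteq> {}" for m using from_nat_into[OF B'ne, of m] unfolding U_def B'_def by blast
  qed
  have cover: "\<exists>m. U m \<subseteq> V" if V: "open V" "V \<noteq> {}" for V
  proof -
    obtain C where C: "C \<in> B'" "C \<subseteq> V" using cov[OF V] by blast
    have "C \<in> range U" using C(1) range_from_nat_into[OF B'ne cB'] unfolding U_def by simp
    then show ?thesis using C(2) by blast
  qed
  show "\<exists>q :: nat \<Rightarrow> nat. \<exists>S. sigma_Cantor S \<and> closure S = UNIV \<and>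
            (\<forall>x\<in>S. \<forall>y\<in>S. x \<noteq> y \<longrightarrow>
               filterlim (\<lambda>n. dist ((f ^^ q n) x) ((f ^^ q n) y)) at_top sequentially)"
    by (rule constr.result[OF c cover])
next
  assume "\<exists>q :: nat \<Rightarrow> nat. \<exists>S. sigma_Cantor S \<and> closure S = UNIV \<and>
            (\<forall>x\<in>S. \<forall>y\<in>S. x \<noteq> y \<longrightarrow>
               filterlim (\<lambda>n. dist ((f ^^ q n) x) ((f ^^ q n) y)) at_top sequentially)"
  then obtain q :: "nat \<Rightarrow> nat" and S where S0: "sigma_Cantor S \<and> closure S = UNIV \<and>
    (\<forall>x\<in>S. \<forall>y\<in>S. x \<noteq> y \<longrightarrow> filterlim (\<lambda>n. dist ((f ^^ q n) x) ((f ^^ q n) y)) at_top sequentially)"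
    by (elim exE)
  note S = conjunct1[OF conjunct2[OF S0]] conjunct2[OF conjunct2[OF S0]]
  show "\<forall>k\<ge>2. (product_topology (\<lambda>_. euclidean) {..<k}) closure_of (D k f)
                 = topspace (product_topology (\<lambda>_. euclidean) {..<k})"
  proof (intro allI impI)
    fix k :: nat assume k2: "2 \<le> k"
    let ?X = "product_topology (\<lambda>_. euclidean) {..<k} :: (nat \<Rightarrow> 'a) topology"
    show "?X closure_of D k f = topspace ?X"
    proof (rule subset_antisym)
      show "?X closure_of D k f \<subseteq> topspace ?X" by (rule closure_of_subset_topspace)
      show "topspace ?X \<subseteq> ?X closure_of D k f"
      proof
        fix x assume x: "x \<in> topspace ?X"
        show "x \<in> ?X closure_of D k f" unfolding in_closure_of
        proof (intro conjI allI impI)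
          show "x \<in> topspace ?X" by fact
          fix T assume T: "x \<in> T \<and> openin ?X T"
          have "\<exists>X. x \<in> PiE {..<k} X \<and> (\<forall>i. openin euclidean (X i)) \<and> finite {i. X i \<noteq> topspace euclidean} \<and> PiE {..<k} X \<subseteq> T"
            by (rule product_topology_open_contains_basis[OF conjunct2[OF T] conjunct1[OF T]])
          then obtain X where X0: "x \<in> PiE {..<k} X \<and> (\<forall>i. openin euclidean (X i)) \<and> finite {i. X i \<noteq> topspace euclidean} \<and> PiE {..<k} X \<subseteq> T"
            by (elim exE)
          note X = conjunct1[OF X0] conjunct1[OF conjunct2[OF X0]] conjunct2[OF conjunct2[OF conjunct2[OF X0]]]
          have infS: "infinite (S \<inter> X i)" if "i < k" for i
          proof (rule dense_inf[OF S(1)])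
            show "open (X i)" using X(2) open_openin by blast
            show "X i \<noteq> {}" using X(1) that by (auto simp: PiE_iff)
          qed
          have "\<exists>y. (\<forall>i<k. y i \<in> S \<inter> X i) \<and> (\<forall>i<k. \<forall>j<k. i \<noteq> j \<longrightarrow> y i \<noteq> y j)"
            by (rule choose_inj) (rule infS)
          then obtain y where y0: "(\<forall>i<k. y i \<in> S \<inter> X i) \<and> (\<forall>i<k. \<forall>j<k. i \<noteq> j \<longrightarrow> y i \<noteq> y j)"
            by (elim exE)
          note y = conjunct1[OF y0] conjunct2[OF y0]
          define z where "z = restrict y {..<k}"
          have "z \<in> PiE {..<k} X" unfolding z_def PiE_iff using y(1) by simp
          then have zT: "z \<in> T" using X(3) by (rule subsetD[rotated])
          define u where "u n = Min {dist ((f ^^ n) (z i)) ((f ^^ n) (z j)) | i j. i < j \<and> j < k}" for n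
          have ev: "\<forall>\<^sub>F n in sequentially. M < u (q n)" for M
          proof -
            have fin: "finite {(i, j). i < j \<and> j < k}"
              by (rule finite_subset[of _ "{..<k} \<times> {..<k}"]) auto
            have "\<forall>p\<in>{(i, j). i < j \<and> j < k}. \<forall>\<^sub>F n in sequentially.
                    M < dist ((f ^^ q n) (z (fst p))) ((f ^^ q n) (z (snd p)))"
            proof
              fix p assume p: "p \<in> {(i, j). i < j \<and> j < k}"
              then have "z (fst p) \<in> S" "z (snd p) \<in> S" "z (fst p) \<noteq> z (snd p)"
                using y unfolding z_def by auto
              then have "filterlim (\<lambda>n. dist ((f ^^ q n) (z (fst p))) ((f ^^ q n) (z (snd p)))) at_top sequentially"
                using S(2) by blast
              then show "\<forall>\<^sub>F n in sequentially. M < dist ((f ^^ q n) (z (fst p))) ((f ^^ q n) (z (snd p)))"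
                unfolding filterlim_at_top_dense by blast
            qed
            from eventually_ball_finite[OF fin this]
            show ?thesis
            proof (rule eventually_mono)
              fix n assume A: "\<forall>p\<in>{(i, j). i < j \<and> j < k}. M < dist ((f ^^ q n) (z (fst p))) ((f ^^ q n) (z (snd p)))"
              have ne: "{dist ((f ^^ q n) (z i)) ((f ^^ q n) (z j)) | i j. i < j \<and> j < k} \<noteq> {}"
              proof -
                have "dist ((f ^^ q n) (z 0)) ((f ^^ q n) (z 1)) \<in> {dist ((f ^^ q n) (z i)) ((f ^^ q n) (z j)) | i j. i < j \<and> j < k}"
                  using k2 by (intro CollectI exI[of _ 0] exI[of _ 1]) simp
                then show ?thesis by blast
              qed
              show "M < u (q n)" unfolding u_def
                using A by (subst Min_gr_iff[OF fin_pairs ne]) auto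
            qed
          qed
          have "z \<in> D k f"
            unfolding D_def
          proof (intro CollectI conjI)
            show "z \<in> PiE {..<k} (\<lambda>_. UNIV)" unfolding z_def by simp
            show "limsup (\<lambda>n. ereal (Min {dist ((f ^^ n) (z i)) ((f ^^ n) (z j)) | i j. i < j \<and> j < k})) = \<infinity>"
              using limsup_infty[of u q, OF ev] unfolding u_def by simp
          qed
          then show "\<exists>y. y \<in> D k f \<and> y \<in> T" using zT by blast
        qed
      qed
    qed
  qed
qed

end
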